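(* Let $k_1,k_2\ge1$ and $n=2^{k_1k_2}-1$. Suppose $n=n_1n_2$ with $n_1,n_2>1$ relatively prime, and let $\mathcal A=\{0,\dots,n_1-1\}\times\{0,\dots,n_2-1\}$. Let $\Lambda\subseteq\mathbb Z^2$ be a lattice that induces a lattice tiling of $\mathcal A$ and also of a shape $\mathcal S$ (necessarily $|\mathcal S|=n$). Let $\delta$ be a nonzero ternary vector such that $(\Lambda,\mathcal S,\delta)$ defines a folding. Let $s_0s_1\cdots s_{n-1}$ be an m-sequence (a binary maximal-length linear shift register sequence) of period $n$. Fold it into $\mathcal S$ by $\delta$: with folded-row $p_0,p_1,\dots$ of $(\Lambda,\mathcal S,\delta)$, write $s_i$ at $p_i$ for $0\le i<n$. Likewise fold it into $\mathcal A$ by $\delta$ using the folded-row of $(\Lambda,\mathcal A,\delta)$. Then the folded shape $\mathcal S$ has the $k_1\times k_2$ window property if and only if the folded array $\mathcal A$ has the $k_1\times k_2$ window property.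
   Context: A shape is a finite nonempty set $\mathcal S\subset\mathbb Z^2$ containing the origin. A lattice is $\Lambda=\{u_1v_1+u_2v_2:u_i\in\mathbb Z\}$ for linearly independent $v_1,v_2\in\mathbb Z^2$. $\Lambda$ induces a lattice tiling of $\mathcal S$ if the translates $\mathcal S+\lambda$, $\lambda\in\Lambda$, are pairwise disjoint and cover $\mathbb Z^2$. Then $c(x)$ denotes the unique $\lambda\in\Lambda$ with $x\in\mathcal S+\lambda$. For a nonzero $\delta\in\{-1,0,1\}^2$, the folded-row is $p_0=0$, $p_{k+1}=(p_k+\delta)-c(p_k+\delta)$. $(\Lambda,\mathcal S,\delta)$ defines a folding if every point of $\mathcal S$ occurs in the folded-row. When a sequence $s_0\cdots s_{n-1}$ with $n=|\mathcal S|$ is folded into $\mathcal S$, the resulting array is extended periodically to $f:\mathbb Z^2\to\{0,1\}$ by $f(p_i+\lambda)=s_i$ for $0\le i<n$ and $\lambda\in\Lambda$ (i.e. every copy $\mathcal S+\lambda$ repeats the contents of $\mathcal S$). The folded shape has the $k_1\times k_2$ window property if every nonzero binary $k_1\times k_2$ matrix $M$ occurs exactly once as a window, i.e. there is exactly one $x\in\mathcal S$ with $f(x+(r,c))=M_{r,c}$ for all $0\le r<k_1$, $0\le c<k_2$. *)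

theory Defs
  imports Main
begin

type_synonym pt = "int \<times> int"

definition padd :: "pt \<Rightarrow> pt \<Rightarrow> pt" where
  "padd x y = (fst x + fst y, snd x + snd y)"

definition psub :: "pt \<Rightarrow> pt \<Rightarrow> pt" where
  "psub x y = (fst x - fst y, snd x - snd y)"

definition is_shape :: "pt set \<Rightarrow> bool" where
  "is_shape S \<longleftrightarrow> finite S \<and> S \<noteq> {} \<and> (0, 0) \<in> S"

definition lin_indep2 :: "pt \<Rightarrow> pt \<Rightarrow> bool" where
  "lin_indep2 v1 v2 \<longleftrightarrow> fst v1 * snd v2 - snd v1 * fst v2 \<noteq> 0"

definition lattice :: "pt \<Rightarrow> pt \<Rightarrow> pt set" where
  "lattice v1 v2 = {(u1 * fst v1 + u2 * fst v2, u1 * snd v1 + u2 * snd v2) | u1 u2. True}"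

definition translate :: "pt set \<Rightarrow> pt \<Rightarrow> pt set" where
  "translate S l = (\<lambda>x. padd x l) ` S"

definition lattice_tiling :: "pt set \<Rightarrow> pt set \<Rightarrow> bool" where
  "lattice_tiling L S \<longleftrightarrow>
     (\<forall>l1\<in>L. \<forall>l2\<in>L. l1 \<noteq> l2 \<longrightarrow> translate S l1 \<inter> translate S l2 = {}) \<and>
     (\<forall>x. \<exists>l\<in>L. x \<in> translate S l)"

definition tcenter :: "pt set \<Rightarrow> pt set \<Rightarrow> pt \<Rightarrow> pt" where
  "tcenter L S x = (THE l. l \<in> L \<and> x \<in> translate S l)"

primrec folded_row :: "pt set \<Rightarrow> pt set \<Rightarrow> pt \<Rightarrow> nat \<Rightarrow> pt" where
  "folded_row L S d 0 = (0, 0)"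
| "folded_row L S d (Suc k) =
     psub (padd (folded_row L S d k) d) (tcenter L S (padd (folded_row L S d k) d))"

definition ternary_nonzero :: "pt \<Rightarrow> bool" where
  "ternary_nonzero d \<longleftrightarrow> fst d \<in> {-1, 0, 1} \<and> snd d \<in> {-1, 0, 1} \<and> d \<noteq> (0, 0)"

definition is_folding :: "pt set \<Rightarrow> pt set \<Rightarrow> pt \<Rightarrow> bool" where
  "is_folding L S d \<longleftrightarrow> (\<forall>x\<in>S. \<exists>i. folded_row L S d i = x)"

text \<open>The folded array extended periodically: f(p_i + l) = s_i.\<close>
definition folded_array :: "pt set \<Rightarrow> pt set \<Rightarrow> pt \<Rightarrow> (nat \<Rightarrow> nat) \<Rightarrow> pt \<Rightarrow> nat" where
  "folded_array L S d s x = s (LEAST i. folded_row L S d i = psub x (tcenter L S x))"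

definition window_property ::
  "pt set \<Rightarrow> pt set \<Rightarrow> pt \<Rightarrow> (nat \<Rightarrow> nat) \<Rightarrow> nat \<Rightarrow> nat \<Rightarrow> bool" where
  "window_property L S d s k1 k2 \<longleftrightarrow>
     (\<forall>M :: nat \<Rightarrow> nat \<Rightarrow> nat.
        (\<forall>r<k1. \<forall>c<k2. M r c \<le> 1) \<longrightarrow> (\<exists>r<k1. \<exists>c<k2. M r c \<noteq> 0) \<longrightarrow>
        (\<exists>!x. x \<in> S \<and>
           (\<forall>r<k1. \<forall>c<k2. folded_array L S d s (padd x (int r, int c)) = M r c)))"

definition least_period :: "(nat \<Rightarrow> nat) \<Rightarrow> nat \<Rightarrow> bool" where
  "least_period s n \<longleftrightarrow> 0 < n \<and> (\<forall>i. s (i + n) = s i) \<and>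
     (\<forall>p. 0 < p \<and> p < n \<longrightarrow> \<not> (\<forall>i. s (i + p) = s i))"

definition m_sequence :: "(nat \<Rightarrow> nat) \<Rightarrow> nat \<Rightarrow> bool" where
  "m_sequence s n \<longleftrightarrow> (\<forall>i. s i \<le> 1) \<and>
     (\<exists>m (c :: nat \<Rightarrow> nat). (\<forall>j<m. c j \<le> 1) \<and> n = 2 ^ m - 1 \<and>
        (\<forall>i. s (i + m) = (\<Sum>j<m. c j * s (i + j)) mod 2)) \<and>
     least_period s n"

end

theory Submission
  imports Defs
begin

definition grp :: "pt set \<Rightarrow> bool" where
  "grp L \<longleftrightarrow> (0,0) \<in> L \<and> (\<forall>a\<in>L. \<forall>b\<in>L. psub a b \<in> L)"

lemma grp_lattice: "grp (lattice v1 v2)"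
  unfolding grp_def lattice_def psub_def
proof (intro conjI ballI)
  show "(0, 0) \<in> {(u1 * fst v1 + u2 * fst v2, u1 * snd v1 + u2 * snd v2) |u1 u2. True}"
    by (rule CollectI, rule exI[of _ 0], rule exI[of _ 0]) simp
  fix a b assume a: "a \<in> {(u1 * fst v1 + u2 * fst v2, u1 * snd v1 + u2 * snd v2) |u1 u2. True}"
    and b: "b \<in> {(u1 * fst v1 + u2 * fst v2, u1 * snd v1 + u2 * snd v2) |u1 u2. True}"
  from a obtain a1 a2 where ha: "a = (a1 * fst v1 + a2 * fst v2, a1 * snd v1 + a2 * snd v2)" by auto
  from b obtain b1 b2 where hb: "b = (b1 * fst v1 + b2 * fst v2, b1 * snd v1 + b2 * snd v2)" by auto
  show "(fst a - fst b, snd a - snd b) \<in> {(u1 * fst v1 + u2 * fst v2, u1 * snd v1 + u2 * snd v2) |u1 u2. True}"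
    by (rule CollectI, rule exI[of _ "a1 - b1"], rule exI[of _ "a2 - b2"]) (simp add: ha hb algebra_simps)
qed

definition cg :: "pt set \<Rightarrow> pt \<Rightarrow> pt \<Rightarrow> bool" where
  "cg L x y \<longleftrightarrow> psub x y \<in> L"

lemma grp_zero: "grp L \<Longrightarrow> (0,0) \<in> L" by (simp add: grp_def)
lemma grp_sub: "grp L \<Longrightarrow> a \<in> L \<Longrightarrow> b \<in> L \<Longrightarrow> psub a b \<in> L" by (simp add: grp_def)
lemma grp_neg: "grp L \<Longrightarrow> a \<in> L \<Longrightarrow> (- fst a, - snd a) \<in> L"
  using grp_sub[of L "(0,0)" a] grp_zero[of L] by (simp add: psub_def)
lemma grp_add: "grp L \<Longrightarrow> a \<in> L \<Longrightarrow> b \<in> L \<Longrightarrow> padd a b \<in> L"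
  using grp_sub[of L a "(- fst b, - snd b)"] grp_neg[of L b] by (simp add: psub_def padd_def)

lemma cg_refl: "grp L \<Longrightarrow> cg L x x"
  using grp_zero[of L] by (simp add: cg_def psub_def)
lemma cg_sym: "grp L \<Longrightarrow> cg L x y \<Longrightarrow> cg L y x"
  using grp_neg[of L "psub x y"] by (simp add: cg_def psub_def)
lemma cg_trans: "grp L \<Longrightarrow> cg L x y \<Longrightarrow> cg L y z \<Longrightarrow> cg L x z"
  using grp_add[of L "psub x y" "psub y z"] by (simp add: cg_def psub_def padd_def)
lemma cg_padd: "cg L x y \<Longrightarrow> cg L (padd x w) (padd y w)"
  by (simp add: cg_def psub_def padd_def)

lemma tc:
  assumes t: "lattice_tiling L S"
  shows "tcenter L S x \<in> L \<and> x \<in> translate S (tcenter L S x)"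
proof -
  have "\<exists>!l. l \<in> L \<and> x \<in> translate S l"
    using t unfolding lattice_tiling_def by blast
  then show ?thesis unfolding tcenter_def by (rule theI')
qed

lemma in_translate: "x \<in> translate S l \<longleftrightarrow> psub x l \<in> S"
proof
  assume "x \<in> translate S l"
  then obtain y where "y \<in> S" "x = padd y l" by (auto simp: translate_def)
  then show "psub x l \<in> S" by (simp add: padd_def psub_def)
next
  assume "psub x l \<in> S"
  moreover have "x = padd (psub x l) l" by (simp add: padd_def psub_def)
  ultimately show "x \<in> translate S l" unfolding translate_def by blast
qed

definition rep :: "pt set \<Rightarrow> pt set \<Rightarrow> pt \<Rightarrow> pt" where
  "rep L S x = psub x (tcenter L S x)"

lemma rep_in: "lattice_tiling L S \<Longrightarrow> rep L S x \<in> S"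
  using tc[of L S x] in_translate by (simp add: rep_def)

lemma rep_cg: "lattice_tiling L S \<Longrightarrow> cg L x (rep L S x)"
  using tc[of L S x] by (simp add: rep_def cg_def psub_def)

lemma uniq:
  assumes t: "lattice_tiling L S" and g: "grp L" and a: "a \<in> S" and b: "b \<in> S" and c: "cg L a b"
  shows "a = b"
proof (rule ccontr)
  assume ne: "a \<noteq> b"
  have 1: "a \<in> translate S (0,0)" using a in_translate[of a S "(0,0)"] by (simp add: psub_def)
  have 2: "a \<in> translate S (psub a b)" using b in_translate[of a S "psub a b"] by (simp add: psub_def)
  have nz: "psub a b \<noteq> (0,0)" using ne by (auto simp: psub_def prod_eq_iff)
  have "psub a b \<in> L" using c by (simp add: cg_def)
  then have "translate S (0,0) \<inter> translate S (psub a b) = {}"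
    using t grp_zero[OF g] nz unfolding lattice_tiling_def by metis
  with 1 2 show False by blast
qed

definition smul :: "nat \<Rightarrow> pt \<Rightarrow> pt" where
  "smul i d = (int i * fst d, int i * snd d)"

lemma row:
  assumes t: "lattice_tiling L S" and g: "grp L" and z: "(0,0) \<in> S"
  shows "folded_row L S d i \<in> S \<and> cg L (smul i d) (folded_row L S d i)"
proof (induction i)
  case 0
  then show ?case using z cg_refl[OF g] by (simp add: smul_def)
next
  case (Suc i)
  have e: "folded_row L S d (Suc i) = rep L S (padd (folded_row L S d i) d)"
    by (simp add: rep_def)
  have "cg L (smul (Suc i) d) (padd (folded_row L S d i) d)"
    using cg_padd[of L "smul i d" "folded_row L S d i" d] Suc.IH
    by (simp add: smul_def padd_def algebra_simps)
  then show ?case using e rep_in[OF t] rep_cg[OF t] cg_trans[OF g] by metis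
qed

lemma key:
  assumes t: "lattice_tiling L S" and g: "grp L" and z: "(0,0) \<in> S"
  shows "folded_row L S d i = rep L S x \<longleftrightarrow> cg L (smul i d) x"
proof
  assume "folded_row L S d i = rep L S x"
  then show "cg L (smul i d) x"
    using row[OF t g z, of d i] rep_cg[OF t, of x] cg_sym[OF g] cg_trans[OF g] by metis
next
  assume c: "cg L (smul i d) x"
  have "cg L (folded_row L S d i) (rep L S x)"
    using row[OF t g z, of d i] rep_cg[OF t, of x] cg_sym[OF g] cg_trans[OF g] c by metis
  then show "folded_row L S d i = rep L S x"
    using uniq[OF t g] row[OF t g z, of d i] rep_in[OF t, of x] by blast
qed

lemma fa:
  assumes t: "lattice_tiling L S" and g: "grp L" and z: "(0,0) \<in> S"
  shows "folded_array L S d s x = s (LEAST i. cg L (smul i d) x)"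
  unfolding folded_array_def using key[OF t g z] by (simp add: rep_def)

lemma fa_cg:
  assumes g: "grp L" and c: "cg L x y"
  shows "(LEAST i. cg L (smul i d) x) = (LEAST i. cg L (smul i d) y)"
proof -
  have "\<And>i. cg L (smul i d) x \<longleftrightarrow> cg L (smul i d) y"
    using c cg_sym[OF g] cg_trans[OF g] by metis
  then show ?thesis by simp
qed

lemma exu:
  assumes tS: "lattice_tiling L S" and tA: "lattice_tiling L A" and g: "grp L"
    and W: "\<And>x y. cg L x y \<Longrightarrow> W x \<Longrightarrow> W y"
    and e: "\<exists>!x. x \<in> S \<and> W x"
  shows "\<exists>!x. x \<in> A \<and> W x"
proof -
  from e obtain x where x: "x \<in> S" "W x" and u: "\<And>z. z \<in> S \<Longrightarrow> W z \<Longrightarrow> z = x" by blast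
  let ?y = "rep L A x"
  have y: "?y \<in> A" "W ?y" using rep_in[OF tA] rep_cg[OF tA] W x by blast+
  show ?thesis
  proof (rule ex1I[of _ ?y])
    show "?y \<in> A \<and> W ?y" using y by blast
  next
    fix z assume z: "z \<in> A \<and> W z"
    have "rep L S z = x" using u rep_in[OF tS] rep_cg[OF tS] W z by blast
    then have "cg L z x" using rep_cg[OF tS, of z] by simp
    then have "cg L z ?y" using rep_cg[OF tA, of x] cg_trans[OF g] by blast
    then show "z = ?y" using uniq[OF tA g] z y by blast
  qed
qed

lemma wp_equiv:
  assumes tS: "lattice_tiling L S" and tA: "lattice_tiling L A" and g: "grp L"
    and zS: "(0,0) \<in> S" and zA: "(0,0) \<in> A"
  shows "window_property L S d s k1 k2 \<longleftrightarrow> window_property L A d s k1 k2"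
proof -
  have F: "folded_array L S d s = folded_array L A d s"
    using fa[OF tS g zS] fa[OF tA g zA] by (intro ext) simp
  define WW where "WW = (\<lambda>M x. \<forall>r<k1. \<forall>c<k2. folded_array L A d s (padd x (int r, int c)) = M r c)"
  have W: "\<And>M x y. cg L x y \<Longrightarrow> WW M x \<Longrightarrow> WW M y"
  proof -
    fix M x y assume c: "cg L x y" and w: "WW M x"
    have "\<And>w. folded_array L A d s (padd x w) = folded_array L A d s (padd y w)"
      using fa[OF tA g zA] fa_cg[OF g cg_padd[OF c]] by simp
    then show "WW M y" using w by (simp add: WW_def)
  qed
  have "(\<exists>!x. x \<in> S \<and> WW M x) \<longleftrightarrow> (\<exists>!x. x \<in> A \<and> WW M x)" for M
  proof -
    have W1: "\<And>x y. cg L x y \<Longrightarrow> WW M x \<Longrightarrow> WW M y" by (rule W)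
    show ?thesis
    proof
      assume "\<exists>!x. x \<in> S \<and> WW M x"
      then show "\<exists>!x. x \<in> A \<and> WW M x" using exu[of L S A "WW M"] tS tA g W1 by blast
    next
      assume "\<exists>!x. x \<in> A \<and> WW M x"
      then show "\<exists>!x. x \<in> S \<and> WW M x" using exu[of L A S "WW M"] tS tA g W1 by blast
    qed
  qed
  then show ?thesis unfolding window_property_def F WW_def by simp
qed

theorem mainTheorem11:
  fixes k1 k2 n n1 n2 :: nat and v1 v2 d :: pt and S :: "pt set" and s :: "nat \<Rightarrow> nat"
  assumes "k1 \<ge> 1" and "k2 \<ge> 1"
    and "n = 2 ^ (k1 * k2) - 1"
    and "n = n1 * n2" and "n1 > 1" and "n2 > 1" and "coprime n1 n2"
    and "lin_indep2 v1 v2"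
    and "is_shape S"
    and "lattice_tiling (lattice v1 v2) ({0..<int n1} \<times> {0..<int n2})"
    and "lattice_tiling (lattice v1 v2) S"
    and "ternary_nonzero d"
    and "is_folding (lattice v1 v2) S d"
    and "m_sequence s n"
  shows "window_property (lattice v1 v2) S d s k1 k2 \<longleftrightarrow>
         window_property (lattice v1 v2) ({0..<int n1} \<times> {0..<int n2}) d s k1 k2"
  using wp_equiv[OF assms(11) assms(10) grp_lattice] assms(5,6,9)
  by (simp add: is_shape_def)

end
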